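(* Let $n$ and $i$ be positive integers with $i<n/3$. Then there exists a partition $\mathfrak p$ of $n$ such that: (1) if $n\neq 4i+2$ and $(n,i)\neq(8,1)$, then for every integer $1\le m\le n$, $m$ is a partial sum of $\mathfrak p$ if and only if $m\notin\{i,\,n-i\}$; (2) if $n=4i+2$ or $(n,i)=(8,1)$, then for every integer $1\le m\le n$, $m$ is a partial sum of $\mathfrak p$ if and only if $m\notin\{i,\,n-i,\,n/2\}$.
   Context: A partition of $n$ is a finite multiset $(a_1,\dots,a_t)$ of positive integers with sum $n$. An integer $m$ is a partial sum of the partition $(a_1,\dots,a_t)$ if $m=a_{j_1}+\cdots+a_{j_\ell}$ for some $\ell\ge1$ and indices $1\le j_1<\dots<j_\ell\le t$. *)

theory Defs
  imports Main "HOL-Library.Multiset"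
begin

definition is_partition :: "nat multiset \<Rightarrow> nat \<Rightarrow> bool" where
  "is_partition p n \<longleftrightarrow> (\<forall>a \<in># p. 0 < a) \<and> sum_mset p = n"

definition partial_sum :: "nat \<Rightarrow> nat multiset \<Rightarrow> bool" where
  "partial_sum m p \<longleftrightarrow> (\<exists>q. q \<subseteq># p \<and> q \<noteq> {#} \<and> sum_mset q = m)"

end

theory Submission imports Defs begin
definition sums :: "nat multiset \<Rightarrow> nat set" where "sums p = sum_mset ` {q. q \<subseteq># p}"

lemma sums_add: "x \<in> sums (add_mset c p) \<longleftrightarrow> x \<in> sums p \<or> (c \<le> x \<and> x - c \<in> sums p)"
proof
  assume "x \<in> sums (add_mset c p)"
  then obtain q where q: "q \<subseteq># add_mset c p" "x = sum_mset q" by (auto simp: sums_def)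
  show "x \<in> sums p \<or> (c \<le> x \<and> x - c \<in> sums p)"
  proof (cases "c \<in># q")
    case True
    then obtain r where r: "q = add_mset c r" by (metis mset_add)
    have "r \<subseteq># p" using q(1) r by simp
    then show ?thesis using q r by (auto simp: sums_def)
  next
    case False
    then have "q \<subseteq># p" using q(1)
      by (metis diff_single_trivial subset_eq_diff_conv add_mset_add_single)
    then show ?thesis using q by (auto simp: sums_def)
  qed
next
  assume "x \<in> sums p \<or> (c \<le> x \<and> x - c \<in> sums p)"
  then show "x \<in> sums (add_mset c p)"
  proof
    assume "x \<in> sums p"
    then obtain q where "q \<subseteq># p" "x = sum_mset q" by (auto simp: sums_def)
    moreover have "q \<subseteq># add_mset c p" using calculation(1) by (metis add_mset_add_single mset_subset_eq_add_left subset_mset.order_trans)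
    ultimately show ?thesis unfolding sums_def by blast
  next
    assume a: "c \<le> x \<and> x - c \<in> sums p"
    then obtain q where "q \<subseteq># p" "x - c = sum_mset q" by (auto simp: sums_def)
    then have "add_mset c q \<subseteq># add_mset c p" "x = sum_mset (add_mset c q)" using a by auto
    then show ?thesis unfolding sums_def by blast
  qed
qed

lemma sums_ones: "sums (replicate_mset k (Suc 0)) = {0..k}"
proof (induction k)
  case 0 show ?case by (auto simp: sums_def)
next
  case (Suc k) show ?case
    unfolding set_eq_iff replicate_mset_Suc sums_add Suc by auto
qed

lemma base2i: assumes "0 < (i::nat)"
  shows "sums (add_mset (i+1) (replicate_mset (i-1) 1)) = {0..2*i} - {i, 2*i - i}"
  using assms unfolding set_eq_iff sums_add One_nat_def sums_ones by auto

lemma L1: fixes x N c i :: nat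
  assumes "i+1 \<le> c" "c+i \<le> N" "c + 2*i \<noteq> N"
  shows "((x \<le> N \<and> x \<noteq> i \<and> x \<noteq> N - i) \<or> (c \<le> x \<and> x - c \<le> N \<and> x - c \<noteq> i \<and> x - c \<noteq> N - i)) \<longleftrightarrow> (x \<le> N + c \<and> x \<noteq> i \<and> x \<noteq> N+c-i)"
proof
  assume "(x \<le> N \<and> x \<noteq> i \<and> x \<noteq> N - i) \<or> (c \<le> x \<and> x - c \<le> N \<and> x - c \<noteq> i \<and> x - c \<noteq> N - i)"
  then show "x \<le> N + c \<and> x \<noteq> i \<and> x \<noteq> N+c-i"
  proof
    assume h: "x \<le> N \<and> x \<noteq> i \<and> x \<noteq> N - i" then show ?thesis using assms by linarith
  next
    assume h: "c \<le> x \<and> x - c \<le> N \<and> x - c \<noteq> i \<and> x - c \<noteq> N - i"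
    then obtain y where y: "x = y + c" by (metis le_add_diff_inverse2)
    have "y \<noteq> N - i" using h y by simp
    then show ?thesis using h y assms by linarith
  qed
next
  assume h: "x \<le> N + c \<and> x \<noteq> i \<and> x \<noteq> N+c-i"
  show "(x \<le> N \<and> x \<noteq> i \<and> x \<noteq> N - i) \<or> (c \<le> x \<and> x - c \<le> N \<and> x - c \<noteq> i \<and> x - c \<noteq> N - i)"
  proof (cases "x \<le> N \<and> x \<noteq> N - i")
    case True then show ?thesis using h by blast
  next
    case False
    then have "x = N - i \<or> N < x" by linarith
    then show ?thesis
    proof
      assume "x = N - i" then show ?thesis using assms by linarith
    next
      assume "N < x" then show ?thesis using assms h by linarith
    qed
  qed
qed

lemma L0: fixes x c i :: nat
  assumes "i+1 \<le> c" "c \<le> 2*i+1"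
  shows "((x \<le> 2*i \<and> x \<noteq> i \<and> x \<noteq> 2*i - i) \<or> (c \<le> x \<and> x - c \<le> 2*i \<and> x - c \<noteq> i \<and> x - c \<noteq> 2*i - i)) \<longleftrightarrow> (x \<le> 2*i + c \<and> x \<noteq> i \<and> x \<noteq> 2*i+c-i)"
proof
  assume "(x \<le> 2*i \<and> x \<noteq> i \<and> x \<noteq> 2*i - i) \<or> (c \<le> x \<and> x - c \<le> 2*i \<and> x - c \<noteq> i \<and> x - c \<noteq> 2*i - i)"
  then show "x \<le> 2*i + c \<and> x \<noteq> i \<and> x \<noteq> 2*i+c-i"
  proof
    assume h: "x \<le> 2*i \<and> x \<noteq> i \<and> x \<noteq> 2*i - i" then show ?thesis using assms by linarith
  next
    assume h: "c \<le> x \<and> x - c \<le> 2*i \<and> x - c \<noteq> i \<and> x - c \<noteq> 2*i - i"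
    then obtain y where y: "x = y + c" by (metis le_add_diff_inverse2)
    then show ?thesis using h y assms by simp
  qed
next
  assume h: "x \<le> 2*i + c \<and> x \<noteq> i \<and> x \<noteq> 2*i+c-i"
  show "(x \<le> 2*i \<and> x \<noteq> i \<and> x \<noteq> 2*i - i) \<or> (c \<le> x \<and> x - c \<le> 2*i \<and> x - c \<noteq> i \<and> x - c \<noteq> 2*i - i)"
  proof (cases "x \<le> 2*i")
    case True then show ?thesis using h by simp
  next
    case False then show ?thesis using assms h by linarith
  qed
qed
lemma L2: fixes x i :: nat
  assumes "0 < i"
  shows "((x \<le> 3*i+1 \<and> x \<noteq> i \<and> x \<noteq> 2*i+1) \<or> (i+1 \<le> x \<and> x - (i+1) \<le> 3*i+1 \<and> x - (i+1) \<noteq> i \<and> x - (i+1) \<noteq> 2*i+1)) \<longleftrightarrow> (x \<le> 4*i+2 \<and> x \<noteq> i \<and> x \<noteq> 2*i+1 \<and> x \<noteq> 3*i+2)"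
proof (cases "x \<le> 3*i+1")
  case True
  consider "x = i" | "x = 2*i+1" | "x \<noteq> i" "x \<noteq> 2*i+1" by blast
  then show ?thesis
  proof cases
    case 1 then show ?thesis by simp
  next
    case 2 then show ?thesis by simp
  next
    case 3
    have "x \<le> 4*i+2" "x \<noteq> 3*i+2" using True by linarith+
    then show ?thesis using 3 True by blast
  qed
next
  case False
  define y where "y = x - (i+1)"
  have xy: "x = y + (i+1)" using False unfolding y_def by linarith
  have "y > 2*i" using False xy by linarith
  then show ?thesis unfolding xy by auto
qed

lemma step0: assumes "sums p = {0..2*i} - {i, 2*i - i}" "i+1 \<le> c" "c \<le> 2*i+1"
  shows "sums (add_mset c p) = {0..2*i+c} - {i, 2*i+c - i}"
proof -
  { fix x have "x \<in> sums (add_mset c p) \<longleftrightarrow> x \<in> {0..2*i+c} - {i, 2*i+c - i}"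
      unfolding sums_add assms(1) using L0[OF assms(2,3), of x] by simp }
  then show ?thesis by blast
qed

lemma step: assumes "sums p = {0..N} - {i, N - i}" "i+1 \<le> c" "c + i \<le> N" "c + 2*i \<noteq> N"
  shows "sums (add_mset c p) = {0..N+c} - {i, N+c - i}"
proof -
  { fix x have "x \<in> sums (add_mset c p) \<longleftrightarrow> x \<in> {0..N+c} - {i, N+c - i}"
      unfolding sums_add assms(1) using L1[OF assms(2,3,4), of x] by simp }
  then show ?thesis by blast
qed

lemma steps: assumes "sums p = {0..N} - {i, N - i}" "3*i+2 \<le> N"
  shows "sums (p + replicate_mset k (i+1)) = {0..N+k*(i+1)} - {i, N+k*(i+1) - i}"
proof (induction k)
  case 0 then show ?case using assms by simp
next
  case (Suc k)
  have "sums (add_mset (i+1) (p + replicate_mset k (i+1))) = {0..N+k*(i+1)+(i+1)} - {i, N+k*(i+1)+(i+1) - i}"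
    by (rule step[OF Suc]) (use assms in auto)
  then show ?case by (simp add: algebra_simps)
qed

lemma exc: assumes "0 < (i::nat)"
  shows "sums (add_mset (i+1) (add_mset (i+1) (add_mset (i+1) (replicate_mset (i-1) 1)))) = {0..4*i+2} - {i, 2*i+1, 3*i+2}"
proof -
  have "sums (add_mset (i+1) (add_mset (i+1) (replicate_mset (i-1) 1))) = {0..2*i+(i+1)} - {i, 2*i+(i+1) - i}"
    by (rule step0[OF base2i[OF assms]]) auto
  moreover have "2*i+(i+1) - i = 2*i+1" "2*i+(i+1) = 3*i+1" by auto
  ultimately have S: "sums (add_mset (i+1) (add_mset (i+1) (replicate_mset (i-1) 1))) = {0..3*i+1} - {i, 2*i+1}" by simp
  { fix x have "x \<in> sums (add_mset (i+1) (add_mset (i+1) (add_mset (i+1) (replicate_mset (i-1) 1)))) \<longleftrightarrow> x \<in> {0..4*i+2} - {i, 2*i+1, 3*i+2}"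
      unfolding sums_add[of _ "i+1" "add_mset (i+1) (add_mset (i+1) (replicate_mset (i-1) 1))"] S using L2[OF assms, of x] by simp }
  then show ?thesis by blast
qed

lemma sums_empty: "sums {#} = {0}" by (simp add: sums_def)

lemma exc81: "sums {#2,3,3::nat#} = {0..8} - {1,4,7}"
proof -
  have s1: "sums {#3::nat#} = {0,3}"
  proof -
    { fix x :: nat have "x \<in> sums (add_mset 3 {#}) \<longleftrightarrow> x \<in> {0,3}" unfolding sums_add sums_empty by auto }
    then show ?thesis by blast
  qed
  have s2: "sums {#3,3::nat#} = {0,3,6}"
  proof -
    { fix x :: nat have "x \<in> sums (add_mset 3 {#3#}) \<longleftrightarrow> x \<in> {0,3,6}" unfolding sums_add s1 by auto }
    then show ?thesis by blast
  qed
  have s3: "sums {#2,3,3::nat#} = {0,2,3,5,6,8}"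
  proof -
    { fix x :: nat have "x \<in> sums (add_mset 2 {#3,3#}) \<longleftrightarrow> x \<in> {0,2,3,5,6,8}" unfolding sums_add s2 by auto }
    then show ?thesis by blast
  qed
  have "{0..8::nat} = {0,1,2,3,4,5,6,7,8}" by auto
  then show ?thesis unfolding s3 by auto
qed

lemma ps_iff: assumes "1 \<le> m" shows "partial_sum m p \<longleftrightarrow> m \<in> sums p"
proof
  assume "partial_sum m p"
  then obtain q where "q \<subseteq># p" "sum_mset q = m" unfolding partial_sum_def by blast
  then show "m \<in> sums p" unfolding sums_def by blast
next
  assume "m \<in> sums p"
  then obtain q where q: "q \<subseteq># p" "sum_mset q = m" unfolding sums_def by blast
  then have "q \<noteq> {#}" using assms by auto
  then show "partial_sum m p" unfolding partial_sum_def using q by blast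
qed

lemma good: assumes "sums p = {0..n} - {i, n-i}" "0 \<notin># p" "sum_mset p = n"
  shows "is_partition p n \<and> (\<forall>m. 1 \<le> m \<and> m \<le> n \<longrightarrow> (partial_sum m p \<longleftrightarrow> m \<notin> {i, n - i}))"
proof
  have "\<forall>a \<in># p. 0 < a" using assms(2) by (metis gr0I)
  then show "is_partition p n" unfolding is_partition_def using assms(3) by blast
next
  show "\<forall>m. 1 \<le> m \<and> m \<le> n \<longrightarrow> (partial_sum m p \<longleftrightarrow> m \<notin> {i, n - i})"
  proof (intro allI impI)
    fix m assume m: "1 \<le> m \<and> m \<le> n"
    then have "partial_sum m p \<longleftrightarrow> m \<in> {0..n} - {i, n-i}" using ps_iff assms(1) by simp
    then show "partial_sum m p \<longleftrightarrow> m \<notin> {i, n - i}" using m by simp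
  qed
qed

theorem lemma2p1:
  fixes n i :: nat
  assumes "0 < i" and "0 < n" and "3 * i < n"
  shows "\<exists>p. is_partition p n \<and>
    ((n \<noteq> 4 * i + 2 \<and> (n, i) \<noteq> (8, 1)) \<longrightarrow>
       (\<forall>m. 1 \<le> m \<and> m \<le> n \<longrightarrow> (partial_sum m p \<longleftrightarrow> m \<notin> {i, n - i}))) \<and>
    ((n = 4 * i + 2 \<or> (n, i) = (8, 1)) \<longrightarrow>
       (\<forall>m. 1 \<le> m \<and> m \<le> n \<longrightarrow> (partial_sum m p \<longleftrightarrow> m \<notin> {i, n - i} \<and> 2 * m \<noteq> n)))"
proof -
  define B where "B = add_mset (i+1) (replicate_mset (i-1) 1)"
  have B: "sums B = {0..2*i} - {i, 2*i - i}" unfolding B_def by (rule base2i[OF assms(1)])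
  have B0: "0 \<notin># B" "sum_mset B = 2*i" unfolding B_def using assms(1) by auto
  consider "n = 4*i+2" | "(n,i) = (8,1)" | "n \<noteq> 4*i+2" "(n,i) \<noteq> (8,1)" by blast
  then show ?thesis
  proof cases
    case 1
    define p where "p = add_mset (i+1) (add_mset (i+1) (add_mset (i+1) (replicate_mset (i-1) 1)))"
    have S: "sums p = {0..4*i+2} - {i, 2*i+1, 3*i+2}" unfolding p_def by (rule exc[OF assms(1)])
    have "is_partition p n" unfolding is_partition_def p_def using 1 assms(1) by auto
    moreover have "\<forall>m. 1 \<le> m \<and> m \<le> n \<longrightarrow> (partial_sum m p \<longleftrightarrow> m \<notin> {i, n - i} \<and> 2 * m \<noteq> n)"
    proof (intro allI impI)
      fix m assume m: "1 \<le> m \<and> m \<le> n"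
      have e1: "n - i = 3*i+2" using 1 by simp
      have e2: "2 * m \<noteq> n \<longleftrightarrow> m \<noteq> 2*i+1" using 1 by linarith
      have "partial_sum m p \<longleftrightarrow> m \<in> {0..4*i+2} - {i, 2*i+1, 3*i+2}" using ps_iff[of m p] m S by simp
      also have "\<dots> \<longleftrightarrow> m \<notin> {i, n - i} \<and> m \<noteq> 2*i+1" using m 1 e1 by auto
      finally show "partial_sum m p \<longleftrightarrow> m \<notin> {i, n - i} \<and> 2 * m \<noteq> n" using e2 by simp
    qed
    ultimately show ?thesis using 1 by blast
  next
    case 2
    define p where "p = {#2,3,3::nat#}"
    have S: "sums p = {0..8} - {1,4,7}" unfolding p_def by (rule exc81)
    have "is_partition p n" unfolding is_partition_def p_def using 2 by auto
    moreover have "\<forall>m. 1 \<le> m \<and> m \<le> n \<longrightarrow> (partial_sum m p \<longleftrightarrow> m \<notin> {i, n - i} \<and> 2 * m \<noteq> n)"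
    proof (intro allI impI)
      fix m assume m: "1 \<le> m \<and> m \<le> n"
      have nn: "n = 8" "i = 1" using 2 by auto
      have "partial_sum m p \<longleftrightarrow> m \<in> {0..8} - {1,4,7}" using ps_iff[of m p] m S by simp
      then show "partial_sum m p \<longleftrightarrow> m \<notin> {i, n - i} \<and> 2 * m \<noteq> n" using m unfolding nn by auto
    qed
    ultimately show ?thesis using 2 by blast
  next
    case 3
    have Bpos: "0 \<notin># B" and Bsum: "sum_mset B = 2*i" using B0 by auto
    have ext: "\<exists>p. sums p = {0..n} - {i, n-i} \<and> 0 \<notin># p \<and> sum_mset p = n"
      if "sums q = {0..N} - {i, N-i}" "0 \<notin># q" "sum_mset q = N" "N = n" for q :: "nat multiset" and N
      using that by blast
    have pos: "0 \<notin># add_mset c q" if "0 \<notin># q" "0 < c" for c :: nat and q :: "nat multiset" using that by auto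
    have posr: "0 \<notin># q + replicate_mset k (i+1)" if "0 \<notin># q" for q :: "nat multiset" and k using that by simp
    have sumr: "sum_mset (q + replicate_mset k (i+1)) = sum_mset q + k*(i+1)" for q :: "nat multiset" and k by simp
    have "\<exists>p. sums p = {0..n} - {i, n-i} \<and> 0 \<notin># p \<and> sum_mset p = n"
    proof (cases "n \<le> 4*i+1")
      case True
      have c1: "i+1 \<le> n-2*i" "n-2*i \<le> 2*i+1" using True assms by linarith+
      have S: "sums (add_mset (n-2*i) B) = {0..2*i+(n-2*i)} - {i, 2*i+(n-2*i) - i}"
        by (rule step0[OF B c1])
      have e: "2*i+(n-2*i) = n" using assms by linarith
      show ?thesis
        by (rule ext[OF S pos[OF Bpos] _ e]) (use c1 Bsum in simp_all)
    next
      case False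
      define k where "k = (n - (3*i+2)) div (i+1)"
      define r where "r = (n - (3*i+2)) mod (i+1)"
      have d: "n - (3*i+2) = k*(i+1) + r" unfolding k_def r_def by (rule div_mult_mod_eq[symmetric])
      have nkr: "n = 3*i+2 + k*(i+1) + r" using d False by linarith
      have "r < i+1" unfolding r_def by simp
      then consider "r < i" | "r = i" by linarith
      then show ?thesis
      proof cases
        case 1
        have c1: "i+1 \<le> i+2+r" "i+2+r \<le> 2*i+1" using 1 by linarith+
        have S1: "sums (add_mset (i+2+r) B) = {0..2*i+(i+2+r)} - {i, 2*i+(i+2+r) - i}"
          by (rule step0[OF B c1])
        have S: "sums (add_mset (i+2+r) B + replicate_mset k (i+1)) = {0..2*i+(i+2+r)+k*(i+1)} - {i, 2*i+(i+2+r)+k*(i+1) - i}"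
          by (rule steps[OF S1]) linarith
        have e: "2*i+(i+2+r)+k*(i+1) = n" using nkr by simp
        show ?thesis
          by (rule ext[OF S posr[OF pos[OF Bpos]] _ e]) (simp_all add: sumr Bsum)
      next
        case 2
        have k1: "k \<ge> 1"
        proof (rule ccontr)
          assume "\<not> k \<ge> 1" then have "k = 0" by simp
          then have "n = 4*i+2" using nkr 2 by simp
          then show False using 3 by simp
        qed
        show ?thesis
        proof (cases "i = 1")
          case False
          have i2: "i \<ge> 2" using False assms(1) by linarith
          have c1: "i+1 \<le> i+2" "i+2 \<le> 2*i+1" using i2 by linarith+
          have S1: "sums (add_mset (i+2) B) = {0..2*i+(i+2)} - {i, 2*i+(i+2) - i}"
            by (rule step0[OF B c1])
          have c2: "i+1 \<le> 2*i+1" "2*i+1 + i \<le> 2*i+(i+2)" "2*i+1 + 2*i \<noteq> 2*i+(i+2)" using i2 by linarith+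
          have S2: "sums (add_mset (2*i+1) (add_mset (i+2) B)) = {0..2*i+(i+2)+(2*i+1)} - {i, 2*i+(i+2)+(2*i+1) - i}"
            by (rule step[OF S1 c2])
          have S: "sums (add_mset (2*i+1) (add_mset (i+2) B) + replicate_mset (k-1) (i+1)) = {0..2*i+(i+2)+(2*i+1)+(k-1)*(i+1)} - {i, 2*i+(i+2)+(2*i+1)+(k-1)*(i+1) - i}"
            by (rule steps[OF S2]) linarith
          obtain k' where k': "k = Suc k'" using k1 by (cases k) auto
          have e: "2*i+(i+2)+(2*i+1)+(k-1)*(i+1) = n" using nkr 2 unfolding k' by (simp add: algebra_simps)
          show ?thesis
            by (rule ext[OF S posr[OF pos[OF pos[OF Bpos]]] _ e]) (simp_all add: sumr Bsum)
        next
          case True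
          have k2: "k \<ge> 2"
          proof (rule ccontr)
            assume "\<not> k \<ge> 2" then have "k = 1" using k1 by simp
            then have "n = 8" using nkr 2 True by simp
            then show False using 3 True by simp
          qed
          have c1: "i+1 \<le> i+2" "i+2 \<le> 2*i+1" using True by linarith+
          have S1: "sums (add_mset (i+2) B) = {0..2*i+(i+2)} - {i, 2*i+(i+2) - i}"
            by (rule step0[OF B c1])
          have c2: "i+1 \<le> i+1" "i+1 + i \<le> 2*i+(i+2)" "i+1 + 2*i \<noteq> 2*i+(i+2)" using True by linarith+
          have S2: "sums (add_mset (i+1) (add_mset (i+2) B)) = {0..2*i+(i+2)+(i+1)} - {i, 2*i+(i+2)+(i+1) - i}"
            by (rule step[OF S1 c2])
          have c3: "i+1 \<le> i+2" "i+2 + i \<le> 2*i+(i+2)+(i+1)" "i+2 + 2*i \<noteq> 2*i+(i+2)+(i+1)" using True by linarith+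
          have S3: "sums (add_mset (i+2) (add_mset (i+1) (add_mset (i+2) B))) = {0..2*i+(i+2)+(i+1)+(i+2)} - {i, 2*i+(i+2)+(i+1)+(i+2) - i}"
            by (rule step[OF S2 c3])
          have S: "sums (add_mset (i+2) (add_mset (i+1) (add_mset (i+2) B)) + replicate_mset (k-2) (i+1)) = {0..2*i+(i+2)+(i+1)+(i+2)+(k-2)*(i+1)} - {i, 2*i+(i+2)+(i+1)+(i+2)+(k-2)*(i+1) - i}"
            by (rule steps[OF S3]) linarith
          obtain k' where k': "k = Suc (Suc k')" using k2 by (metis add_2_eq_Suc le_Suc_ex)
          have e: "2*i+(i+2)+(i+1)+(i+2)+(k-2)*(i+1) = n" using nkr 2 True unfolding k' by simp
          show ?thesis
            by (rule ext[OF S posr[OF pos[OF pos[OF pos[OF Bpos]]]] _ e]) (simp_all add: sumr Bsum)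
        qed
      qed
    qed
    then obtain p where "sums p = {0..n} - {i, n-i}" "0 \<notin># p" "sum_mset p = n" by blast
    from good[OF this] show ?thesis using 3 by blast
  qed
qed

end
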